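(* Let $P$ be a property that is a necessary condition for the existence of a perfect factor, i.e. for every $(G',f')\in\mathcal C$ such that $G'$ has a perfect $f'$-factor we have $P(G',f')$. Let $\kappa$ be an infinite cardinal and $(G,f)\in\mathcal C$ with $|V(G)|=\kappa^+$. If $G$ possesses a perfect $f$-factor, then $(G,f)$ is not $P$-destructed.
   Context: A graph is $G=(V,E)$ with $V$ a nonempty set and $E\subseteq\{e\subseteq V:|e|=2\}$. For $F\subseteq E$ and $x\in V$, $d_F(x)$ is the cardinal $|\{e\in F:x\in e\}|$. For $f:V\to$ Cardinals, an $f$-factor of $G$ is $F\subseteq E$ with $d_F(x)\le f(x)$ for all $x$; it is perfect if $d_F(x)=f(x)$ for all $x$; $f^{-1}(\lambda)=\{x\in V:f(x)=\lambda\}$. $\mathcal C$ is the class of all pairs $(G,f)$ with $G=(V,E)$ a graph, $f:V\to$ Cardinals, and $f(x)\le d_E(x)$ for all $x\in V$. A property $P$ is a class of pairs; $P(G,f)$ (also "$(G,f)$ fulfills $P$") means that $(G,f)\in\mathcal C$ and $(G,f)$ has property $P$. Destructions: let $(G,f)\in\mathcal C$, $G=(V,E)$, $|V|=\kappa^+$ for an infinite cardinal $\kappa$. Let $(A_\alpha)_{\alpha<\kappa^+}$ be an increasing continuous sequence (i.e. $A_\lambda=\bigcup_{\alpha<\lambda}A_\alpha$ for limit $\lambda$) of subsets of $V$ with $|A_\alpha|<\kappa^+$ for all $\alpha$ and $V=\bigcup_{\alpha<\kappa^+}A_\alpha$. For $\alpha<\kappa^+$ put $V_\alpha=(V\setminus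 A_\alpha)\cup f^{-1}(\kappa^+)$, $E_\alpha=\{\{x,y\}\in E: x\in V_\alpha,\ y\in V\setminus A_\alpha\}$, $G_\alpha=(V_\alpha,E_\alpha)$, $f_\alpha=f\restriction V_\alpha$. For a property $P$, $(A_\alpha)_{\alpha<\kappa^+}$ is a $P$-destruction of $(G,f)$ if $S=\{\alpha<\kappa^+: P(G_\alpha,f_\alpha)\text{ fails}\}$ is stationary in $\kappa^+$; $(G,f)$ is $P$-destructed if some such sequence is a $P$-destruction of $(G,f)$. *)

theory Defs
  imports Main
begin

definition is_graph :: "'a set \<Rightarrow> 'a set set \<Rightarrow> bool" where
  "is_graph V E \<longleftrightarrow> V \<noteq> {} \<and> E \<subseteq> {e. \<exists>x y. x \<in> V \<and> y \<in> V \<and> x \<noteq> y \<and> e = {x, y}}"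

(* d_F(x) is the cardinal |{e in F. x in e}| ; cardinal values f(x) are represented by sets f x,
   compared via card_of *)
definition inC :: "'a set \<Rightarrow> 'a set set \<Rightarrow> ('a \<Rightarrow> 'b set) \<Rightarrow> bool" where
  "inC V E f \<longleftrightarrow> is_graph V E \<and> (\<forall>x\<in>V. (card_of (f x), card_of {e\<in>E. x \<in> e}) \<in> ordLeq)"

definition perfect_factor :: "'a set \<Rightarrow> 'a set set \<Rightarrow> ('a \<Rightarrow> 'b set) \<Rightarrow> 'a set set \<Rightarrow> bool" where
  "perfect_factor V E f F \<longleftrightarrow> F \<subseteq> E \<and> (\<forall>x\<in>V. (card_of {e\<in>F. x \<in> e}, card_of (f x)) \<in> ordIso)"

definition fulfills :: "('a set \<Rightarrow> 'a set set \<Rightarrow> ('a \<Rightarrow> 'b set) \<Rightarrow> bool)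
    \<Rightarrow> 'a set \<Rightarrow> 'a set set \<Rightarrow> ('a \<Rightarrow> 'b set) \<Rightarrow> bool" where
  "fulfills P V E f \<longleftrightarrow> inC V E f \<and> P V E f"

(* ordinals below kappa^+ are the elements of Field R for the well-order R = cardSuc (card_of K) *)
definition lessR :: "'c rel \<Rightarrow> 'c \<Rightarrow> 'c \<Rightarrow> bool" where
  "lessR R a b \<longleftrightarrow> (a, b) \<in> R \<and> a \<noteq> b"

definition is_limit :: "'c rel \<Rightarrow> 'c \<Rightarrow> bool" where
  "is_limit R a \<longleftrightarrow> a \<in> Field R \<and> (\<exists>b. lessR R b a)
     \<and> (\<forall>b. lessR R b a \<longrightarrow> (\<exists>c. lessR R b c \<and> lessR R c a))"

definition club :: "'c rel \<Rightarrow> 'c set \<Rightarrow> bool" where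
  "club R C \<longleftrightarrow> C \<subseteq> Field R
     \<and> (\<forall>a\<in>Field R. \<exists>c\<in>C. lessR R a c)
     \<and> (\<forall>a. is_limit R a \<and> (\<forall>b. lessR R b a \<longrightarrow> (\<exists>c\<in>C. lessR R b c \<and> lessR R c a))
            \<longrightarrow> a \<in> C)"

definition stationary :: "'c rel \<Rightarrow> 'c set \<Rightarrow> bool" where
  "stationary R S \<longleftrightarrow> S \<subseteq> Field R \<and> (\<forall>C. club R C \<longrightarrow> S \<inter> C \<noteq> {})"

definition destr_seq :: "'k set \<Rightarrow> 'a set \<Rightarrow> ('k set \<Rightarrow> 'a set) \<Rightarrow> bool" where
  "destr_seq K V A \<longleftrightarrow>
     (\<forall>a\<in>Field (cardSuc (card_of K)). (card_of (A a), cardSuc (card_of K)) \<in> ordLess)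
   \<and> (\<forall>a b. (a, b) \<in> cardSuc (card_of K) \<longrightarrow> A a \<subseteq> A b)
   \<and> (\<forall>a. is_limit (cardSuc (card_of K)) a \<longrightarrow> A a = \<Union>{A b |b. lessR (cardSuc (card_of K)) b a})
   \<and> V = \<Union>{A a |a. a \<in> Field (cardSuc (card_of K))}"

definition V_at :: "'k set \<Rightarrow> 'a set \<Rightarrow> ('a \<Rightarrow> 'b set) \<Rightarrow> 'a set \<Rightarrow> 'a set" where
  "V_at K V f Aa = (V - Aa) \<union> {x\<in>V. (card_of (f x), cardSuc (card_of K)) \<in> ordIso}"

definition E_at :: "'k set \<Rightarrow> 'a set \<Rightarrow> 'a set set \<Rightarrow> ('a \<Rightarrow> 'b set) \<Rightarrow> 'a set \<Rightarrow> 'a set set" where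
  "E_at K V E f Aa = {e\<in>E. \<exists>x y. e = {x, y} \<and> x \<in> V_at K V f Aa \<and> y \<in> V - Aa}"

definition f_at :: "'k set \<Rightarrow> 'a set \<Rightarrow> ('a \<Rightarrow> 'b set) \<Rightarrow> 'a set \<Rightarrow> 'a \<Rightarrow> 'b set" where
  "f_at K V f Aa = (\<lambda>x. if x \<in> V_at K V f Aa then f x else {})"

definition is_P_destruction ::
  "('a set \<Rightarrow> 'a set set \<Rightarrow> ('a \<Rightarrow> 'b set) \<Rightarrow> bool) \<Rightarrow> 'k set
     \<Rightarrow> 'a set \<Rightarrow> 'a set set \<Rightarrow> ('a \<Rightarrow> 'b set) \<Rightarrow> ('k set \<Rightarrow> 'a set) \<Rightarrow> bool" where
  "is_P_destruction P K V E f A \<longleftrightarrow> destr_seq K V A \<and>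
     stationary (cardSuc (card_of K))
       {a \<in> Field (cardSuc (card_of K)).
          \<not> fulfills P (V_at K V f (A a)) (E_at K V E f (A a)) (f_at K V f (A a))}"

definition P_destructed ::
  "('a set \<Rightarrow> 'a set set \<Rightarrow> ('a \<Rightarrow> 'b set) \<Rightarrow> bool) \<Rightarrow> 'k set
     \<Rightarrow> 'a set \<Rightarrow> 'a set set \<Rightarrow> ('a \<Rightarrow> 'b set) \<Rightarrow> bool" where
  "P_destructed P K V E f \<longleftrightarrow> (\<exists>A. is_P_destruction P K V E f A)"

end

theory Submission
  imports Defs
begin
unbundle cardinal_syntax

locale L4 =
  fixes K :: "'k set" and V :: "'a set" and E F :: "'a set set"
    and f :: "'a \<Rightarrow> 'b set" and A :: "'k set \<Rightarrow> 'a set"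
  assumes infK: "infinite K" and G: "is_graph V E"
    and sz: "|V| =o cardSuc |K|"
    and FE: "F \<subseteq> E" and Fdeg: "\<forall>x\<in>V. |{e\<in>F. x\<in>e}| =o |f x|"
    and DS: "destr_seq K V A"
begin
unbundle cardinal_syntax

abbreviation "R \<equiv> cardSuc |K|"

definition nb where "nb y = {z. {y,z} \<in> F}"
definition small where "small y \<longleftrightarrow> \<not> |f y| =o R"
definition cl where "cl X \<longleftrightarrow> (\<forall>y\<in>X. small y \<longrightarrow> nb y \<subseteq> X)"
definition NN where "NN X = (\<Union>y\<in>{y\<in>X. small y}. nb y)"

lemma CO: "Card_order R" by (simp add: cardSuc_Card_order card_of_Card_order)
lemma WO: "Well_order R" using CO by (simp add: card_order_on_well_order_on)
lemma wo: "wo_rel R" using WO by (simp add: wo_rel_def)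
lemma trans': "(a,b)\<in>R \<Longrightarrow> (b,c)\<in>R \<Longrightarrow> (a,c)\<in>R"
  using wo_rel.TRANS[OF wo] unfolding trans_def by blast
lemma antisym': "(a,b)\<in>R \<Longrightarrow> (b,a)\<in>R \<Longrightarrow> a = b"
  using wo_rel.ANTISYM[OF wo] unfolding antisym_def by blast
lemma total': "a\<in>Field R \<Longrightarrow> b\<in>Field R \<Longrightarrow> (a,b)\<in>R \<or> (b,a)\<in>R"
  using wo_rel.TOTALS[OF wo] by blast
lemma refl': "a\<in>Field R \<Longrightarrow> (a,a)\<in>R"
  using wo_rel.REFL[OF wo] unfolding refl_on_def by blast
lemma reg: "regularCard R"
  using card_of_Card_order[of K] infK Field_card_of[of K] infinite_cardSuc_regularCard by metis
lemma CinfR: "Cinfinite R"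
  using card_of_Card_order[of K] infK Field_card_of[of K] Cinfinite_cardSuc[of "|K|"] unfolding cinfinite_def by metis
lemma infR: "infinite (Field R)" using CinfR by (simp add: cinfinite_def)
lemma nat_less: "|UNIV::nat set| <o R"
proof -
  have "|UNIV::nat set| \<le>o |K|" using infK infinite_iff_card_of_nat by blast
  moreover have "|K| <o R" by (simp add: cardSuc_greater card_of_Card_order)
  ultimately show ?thesis using ordLeq_ordLess_trans by blast
qed

lemma monoA: "(a,b)\<in>R \<Longrightarrow> A a \<subseteq> A b" using DS unfolding destr_seq_def by blast
lemma Asmall: "a\<in>Field R \<Longrightarrow> |A a| <o R" using DS unfolding destr_seq_def by blast
lemma AsubV: "a\<in>Field R \<Longrightarrow> A a \<subseteq> V" using DS unfolding destr_seq_def by blast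
lemma Vunion: "V = (\<Union>i\<in>Field R. A i)" using DS unfolding destr_seq_def by blast
lemma cont: "is_limit R a \<Longrightarrow> A a = \<Union>{A b |b. lessR R b a}" using DS unfolding destr_seq_def by blast

lemma finless: "finite X \<Longrightarrow> |X| <o R"
  using finite_ordLess_infinite[of "|X|" R] WO infR Field_card_of[of X] card_of_Well_order[of X]
  by metis

lemma nomax: assumes a: "a\<in>Field R" shows "\<exists>b. (a,b)\<in>R \<and> a\<noteq>b"
proof (rule ccontr)
  assume nb: "\<not> ?thesis"
  have "Field R \<subseteq> underS R a \<union> {a}"
  proof
    fix b assume b: "b \<in> Field R"
    show "b \<in> underS R a \<union> {a}"
      using total'[OF a b] nb b unfolding underS_def by auto
  qed
  hence "|Field R| \<le>o |underS R a \<union> {a}|" by (rule card_of_mono1)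
  moreover have "|underS R a \<union> {a}| <o R"
    using card_of_Un_ordLess_infinite_Field[OF infR CO card_of_underS[OF CO a] finless[of "{a}"]] by simp
  ultimately have "|Field R| <o R" using ordLeq_ordLess_trans by blast
  thus False using card_of_Field_ordIso[OF CO] not_ordLess_ordIso by blast
qed

lemma bound:
  assumes X: "X \<subseteq> V" "|X| <o R" and g: "g \<in> Field R"
  shows "\<exists>b. (g,b)\<in>R \<and> g\<noteq>b \<and> X \<subseteq> A b"
proof -
  have "relChain R A" unfolding relChain_def using monoA by blast
  then obtain i where i: "i\<in>Field R" "X \<subseteq> A i"
    using regularCard_UNION[OF CO reg, of A X] X Vunion by blast
  define m where "m = (if (i,g)\<in>R then g else i)"
  have m: "(i,m)\<in>R" "(g,m)\<in>R" using total'[OF i(1) g] refl'[OF i(1)] refl'[OF g]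
    unfolding m_def by auto
  have "m \<in> Field R" using m by (auto intro: FieldI2)
  then obtain b where b: "(m,b)\<in>R" "m\<noteq>b" using nomax by blast
  have "(g,b)\<in>R" using trans'[OF m(2) b(1)] .
  moreover have "g \<noteq> b" using b m antisym' by blast
  moreover have "X \<subseteq> A b" using i monoA[OF trans'[OF m(1) b(1)]] by blast
  ultimately show ?thesis by blast
qed

lemma edgeE: assumes "e \<in> E" obtains p q where "p\<in>V" "q\<in>V" "p\<noteq>q" "e = {p,q}"
  using assms G unfolding is_graph_def by blast

lemma nb_sub: "nb y \<subseteq> V"
proof
  fix z assume "z \<in> nb y"
  hence "{y,z} \<in> E" using FE unfolding nb_def by blast
  then obtain p q where "p\<in>V" "q\<in>V" "{y,z} = {p,q}" by (rule edgeE)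
  thus "z \<in> V" by (metis doubleton_eq_iff)
qed

lemma nb_ne: "z \<in> nb y \<Longrightarrow> z \<noteq> y"
proof
  assume "z \<in> nb y" "z = y"
  hence "{y,z} \<in> E" using FE unfolding nb_def by blast
  then obtain p q where "p\<noteq>q" "{y,z} = {p,q}" by (rule edgeE)
  with \<open>z = y\<close> show False by (metis doubleton_eq_iff)
qed

lemma nb_inj: "inj_on (\<lambda>z. {y,z}) X"
  unfolding inj_on_def by (metis doubleton_eq_iff)

lemma Fe_eq: "{e\<in>F. y\<in>e} = (\<lambda>z. {y,z}) ` nb y"
proof
  show "{e\<in>F. y\<in>e} \<subseteq> (\<lambda>z. {y,z}) ` nb y"
  proof
    fix e assume e: "e \<in> {e\<in>F. y\<in>e}"
    hence "e \<in> E" using FE by blast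
    then obtain p q where pq: "e = {p,q}" by (rule edgeE)
    have "e = {y, if y = p then q else p}" using e pq by auto
    thus "e \<in> (\<lambda>z. {y,z}) ` nb y" using e unfolding nb_def by auto
  qed
  show "(\<lambda>z. {y,z}) ` nb y \<subseteq> {e\<in>F. y\<in>e}" unfolding nb_def by auto
qed

lemma nb_card: "|nb y| =o |{e\<in>F. y\<in>e}|"
proof -
  have "bij_betw (\<lambda>z. {y,z}) (nb y) {e\<in>F. y\<in>e}"
    unfolding Fe_eq by (rule inj_on_imp_bij_betw[OF nb_inj])
  thus ?thesis using card_of_ordIso by blast
qed

lemma nb_f: "y \<in> V \<Longrightarrow> |nb y| =o |f y|"
  using nb_card Fdeg ordIso_transitive by blast

lemma nb_le: "|nb y| \<le>o R"
  using card_of_mono1[OF nb_sub] sz ordLeq_ordIso_trans by blast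

lemma nb_small: assumes "y \<in> V" "small y" shows "|nb y| <o R"
proof -
  have "\<not> |nb y| =o R"
    using assms nb_f[of y] ordIso_symmetric ordIso_transitive unfolding small_def by blast
  thus ?thesis using nb_le ordLeq_iff_ordLess_or_ordIso by blast
qed

lemma NN_sub: "NN X \<subseteq> V" unfolding NN_def using nb_sub by blast

lemma NN_small: assumes "X \<subseteq> V" "|X| <o R" shows "|NN X| <o R"
proof -
  have "|{y\<in>X. small y}| <o R"
    using card_of_mono1[of "{y\<in>X. small y}" X] assms(2) ordLeq_ordLess_trans by blast
  moreover have "\<forall>y\<in>{y\<in>X. small y}. |nb y| <o R" using assms(1) nb_small by blast
  ultimately show ?thesis unfolding NN_def
    using card_of_UNION_ordLess_infinite_Field_regularCard[OF reg CinfR] by blast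
qed

lemma unbounded: assumes a: "a \<in> Field R"
  shows "\<exists>c\<in>Field R. (a,c)\<in>R \<and> a\<noteq>c \<and> cl (A c)"
proof -
  have "\<forall>b\<in>Field R. \<exists>g. (b,g)\<in>R \<and> b\<noteq>g \<and> NN (A b) \<subseteq> A g"
  proof
    fix b assume b: "b \<in> Field R"
    have "A b \<subseteq> V" "|A b| <o R" using AsubV[OF b] Asmall[OF b] by auto
    hence "|NN (A b)| <o R" by (rule NN_small)
    thus "\<exists>g. (b,g)\<in>R \<and> b\<noteq>g \<and> NN (A b) \<subseteq> A g" using bound[OF NN_sub _ b] by blast
  qed
  then obtain g where g: "\<And>b. b\<in>Field R \<Longrightarrow> (b,g b)\<in>R \<and> b\<noteq>g b \<and> NN (A b) \<subseteq> A (g b)"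
    by metis
  define s where "s n = (g ^^ n) a" for n
  have sF: "s n \<in> Field R" for n
  proof (induction n)
    case 0 thus ?case using a by (simp add: s_def)
  next
    case (Suc n)
    have "(s n, g (s n)) \<in> R" using g[OF Suc] by blast
    hence "g (s n) \<in> Field R" by (rule FieldI2)
    thus ?case by (simp add: s_def)
  qed
  have sS: "s (Suc n) = g (s n)" for n by (simp add: s_def)
  have slt: "(s n, s (Suc n)) \<in> R \<and> s n \<noteq> s (Suc n) \<and> NN (A (s n)) \<subseteq> A (s (Suc n))" for n
    using g[OF sF[of n]] sS by simp
  have "\<not> cofinal (range s) R"
  proof
    assume "cofinal (range s) R"
    moreover have "range s \<subseteq> Field R" using sF by blast
    ultimately have "|range s| =o R" using reg unfolding regularCard_def by blast
    moreover have "|range s| <o R" using card_of_image[of s UNIV] nat_less ordLeq_ordLess_trans by blast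
    ultimately show False using not_ordLess_ordIso by blast
  qed
  then obtain u where u: "u \<in> Field R" "\<forall>n. u = s n \<or> (u, s n) \<notin> R"
    unfolding cofinal_def by blast
  define U where "U = {c\<in>Field R. \<forall>n. (s n, c) \<in> R}"
  have "(s n, u) \<in> R" for n
  proof (cases "u = s n")
    case True thus ?thesis using refl'[OF u(1)] by simp
  next
    case False thus ?thesis using u(2) total'[OF u(1) sF[of n]] by blast
  qed
  hence "u \<in> U" unfolding U_def using u(1) by blast
  hence UF: "U \<subseteq> Field R" "U \<noteq> {}" unfolding U_def by auto
  define c where "c = wo_rel.minim R U"
  have cU: "c \<in> U" unfolding c_def using wo_rel.minim_in[OF wo UF] .
  have cleast: "\<And>x. x \<in> U \<Longrightarrow> (c,x) \<in> R" unfolding c_def using wo_rel.minim_least[OF wo UF(1)] by blast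
  have cF: "c \<in> Field R" using cU U_def by blast
  have sc: "(s n, c) \<in> R \<and> s n \<noteq> c" for n
  proof -
    have 1: "(s n, c) \<in> R" "(s (Suc n), c) \<in> R" using cU U_def by auto
    have "s n \<noteq> c" using 1 slt[of n] antisym' by metis
    thus ?thesis using 1 by blast
  qed
  have below: "\<exists>n. (b, s n) \<in> R \<and> b \<noteq> s n" if b: "(b,c)\<in>R" "b \<noteq> c" for b
  proof -
    have bF: "b \<in> Field R" using b by (auto intro: FieldI1)
    have "b \<notin> U" using cleast b antisym' by blast
    then obtain n where "(s n, b) \<notin> R" using bF U_def by blast
    moreover have "(b, s n) \<in> R" using total'[OF bF sF[of n]] calculation by blast
    ultimately have "(b, s n) \<in> R \<and> b \<noteq> s n" using refl'[OF bF] by blast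
    thus ?thesis by blast
  qed
  have lim: "is_limit R c"
    unfolding is_limit_def
  proof (intro conjI allI impI)
    show "c \<in> Field R" by (rule cF)
    show "\<exists>b. lessR R b c" using sc[of 0] unfolding lessR_def by blast
  next
    fix b assume "lessR R b c"
    then obtain n where "(b, s n) \<in> R" "b \<noteq> s n" using below unfolding lessR_def by blast
    thus "\<exists>d. lessR R b d \<and> lessR R d c" using sc[of n] unfolding lessR_def by blast
  qed
  have "cl (A c)"
    unfolding cl_def
  proof (intro ballI impI)
    fix y assume y: "y \<in> A c" "small y"
    then obtain b where b: "(b,c)\<in>R" "b\<noteq>c" "y \<in> A b" using cont[OF lim] unfolding lessR_def by blast
    then obtain n where n: "(b, s n) \<in> R" using below by blast
    have "y \<in> A (s n)" using monoA[OF n] b by blast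
    hence "nb y \<subseteq> NN (A (s n))" using y unfolding NN_def by blast
    also have "\<dots> \<subseteq> A (s (Suc n))" using slt by blast
    also have "\<dots> \<subseteq> A c" using monoA sc by blast
    finally show "nb y \<subseteq> A c" .
  qed
  moreover have "s 0 = a" by (simp add: s_def)
  ultimately show ?thesis using sc[of 0] cF by auto
qed

lemma closed:
  assumes lim: "is_limit R a"
    and H: "\<forall>b. lessR R b a \<longrightarrow> (\<exists>c\<in>{a\<in>Field R. cl (A a)}. lessR R b c \<and> lessR R c a)"
  shows "cl (A a)"
  unfolding cl_def
proof (intro ballI impI)
  fix y assume y: "y \<in> A a" "small y"
  then obtain b where b: "lessR R b a" "y \<in> A b" using cont[OF lim] by blast
  then obtain c where c: "cl (A c)" "lessR R b c" "lessR R c a" using H by blast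
  have "y \<in> A c" using monoA c(2) b(2) unfolding lessR_def by blast
  hence "nb y \<subseteq> A c" using c(1) y(2) unfolding cl_def by blast
  thus "nb y \<subseteq> A a" using monoA c(3) unfolding lessR_def by blast
qed

lemma clubC: "club R {a\<in>Field R. cl (A a)}"
  unfolding club_def
proof (intro conjI allI ballI impI)
  show "{a\<in>Field R. cl (A a)} \<subseteq> Field R" by blast
next
  fix a assume "a \<in> Field R"
  thus "\<exists>c\<in>{a\<in>Field R. cl (A a)}. lessR R a c" using unbounded unfolding lessR_def by blast
next
  fix a assume "is_limit R a \<and> (\<forall>b. lessR R b a \<longrightarrow> (\<exists>c\<in>{a\<in>Field R. cl (A a)}. lessR R b c \<and> lessR R c a))"
  thus "a \<in> {a\<in>Field R. cl (A a)}" using closed unfolding is_limit_def by blast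
qed

lemma good:
  assumes a: "a \<in> Field R" and cla: "cl (A a)"
  shows "inC (V_at K V f (A a)) (E_at K V E f (A a)) (f_at K V f (A a))
    \<and> perfect_factor (V_at K V f (A a)) (E_at K V E f (A a)) (f_at K V f (A a)) (F \<inter> E_at K V E f (A a))"
proof -
  define Aa where "Aa = A a"
  define Va where "Va = V_at K V f Aa"
  define Ea where "Ea = E_at K V E f Aa"
  define Fa where "Fa = F \<inter> Ea"
  have Va_def': "Va = (V - Aa) \<union> {x\<in>V. |f x| =o R}" unfolding Va_def V_at_def by simp
  have Ea_def': "Ea = {e\<in>E. \<exists>x y. e = {x, y} \<and> x \<in> Va \<and> y \<in> V - Aa}"
    unfolding Ea_def E_at_def Va_def by simp
  have VAsub: "V - Aa \<subseteq> Va" unfolding Va_def' by blast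
  have bigsub: "\<And>x. x \<in> V \<Longrightarrow> |f x| =o R \<Longrightarrow> x \<in> Va" unfolding Va_def' by blast
  have VaV: "Va \<subseteq> V" unfolding Va_def' by blast
  have EaI: "\<And>e x y. e \<in> E \<Longrightarrow> e = {x,y} \<Longrightarrow> x \<in> Va \<Longrightarrow> y \<in> V - Aa \<Longrightarrow> e \<in> Ea"
    unfolding Ea_def' by blast
  have fa: "x \<in> Va \<Longrightarrow> f_at K V f Aa x = f x" for x unfolding f_at_def Va_def by simp
  have AaR: "|Aa| <o R" using Asmall[OF a] Aa_def by simp
  have VA: "V - Aa \<noteq> {}"
  proof
    assume "V - Aa = {}"
    hence "|V| \<le>o |Aa|" using card_of_mono1[of V Aa] by blast
    hence "|V| <o R" using AaR ordLeq_ordLess_trans by blast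
    thus False using sz not_ordLess_ordIso by blast
  qed
  have graph: "is_graph Va Ea"
    unfolding is_graph_def
  proof
    show "Va \<noteq> {}" using VA VAsub by blast
    show "Ea \<subseteq> {e. \<exists>x y. x \<in> Va \<and> y \<in> Va \<and> x \<noteq> y \<and> e = {x, y}}"
    proof
      fix e assume e: "e \<in> Ea"
      then obtain x y where xy: "e = {x,y}" "x \<in> Va" "y \<in> V - Aa" "e \<in> E" unfolding Ea_def' by blast
      from xy(4) obtain p q where "p \<noteq> q" "e = {p,q}" by (rule edgeE)
      hence "x \<noteq> y" using xy(1) by (metis doubleton_eq_iff)
      thus "e \<in> {e. \<exists>x y. x \<in> Va \<and> y \<in> Va \<and> x \<noteq> y \<and> e = {x, y}}"
        using xy VAsub by blast
    qed
  qed
  have deg: "|{e\<in>Fa. x\<in>e}| =o |f x|" if x: "x \<in> Va" for x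
  proof (cases "x \<in> Aa")
    case False
    hence xV: "x \<in> V - Aa" using x VaV by blast
    have "{e\<in>Fa. x\<in>e} = {e\<in>F. x\<in>e}"
    proof
      show "{e\<in>Fa. x\<in>e} \<subseteq> {e\<in>F. x\<in>e}" unfolding Fa_def by blast
      show "{e\<in>F. x\<in>e} \<subseteq> {e\<in>Fa. x\<in>e}"
      proof
        fix e assume e: "e \<in> {e\<in>F. x\<in>e}"
        then obtain z where z: "z \<in> nb x" "e = {x,z}" using Fe_eq by blast
        have zV: "z \<in> V" using z nb_sub by blast
        have eE: "e \<in> E" using e FE by blast
        have "e \<in> Ea"
        proof (cases "z \<in> Aa")
          case False
          thus ?thesis using EaI[OF eE z(2)] xV zV VAsub by blast
        next
          case True
          show ?thesis
          proof (cases "small z")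
            case True
            have "x \<in> nb z" using z e unfolding nb_def by (simp add: insert_commute)
            hence "x \<in> Aa" using cla True \<open>z \<in> Aa\<close> unfolding cl_def Aa_def by blast
            thus ?thesis using xV by blast
          next
            case False
            hence "z \<in> Va" using zV bigsub unfolding small_def by blast
            moreover have "e = {z,x}" using z by (simp add: insert_commute)
            ultimately show ?thesis using EaI[OF eE] xV by blast
          qed
        qed
        thus "e \<in> {e\<in>Fa. x\<in>e}" using e Fa_def by blast
      qed
    qed
    thus ?thesis using Fdeg xV by (metis DiffD1)
  next
    case True
    have xV: "x \<in> V" using x VaV by blast
    have fx: "|f x| =o R" using x True unfolding Va_def' by blast
    have eq: "{e\<in>Fa. x\<in>e} = (\<lambda>z. {x,z}) ` (nb x - Aa)"
    proof
      show "{e\<in>Fa. x\<in>e} \<subseteq> (\<lambda>z. {x,z}) ` (nb x - Aa)"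
      proof
        fix e assume e: "e \<in> {e\<in>Fa. x\<in>e}"
        then obtain p q where pq: "e = {p,q}" "q \<in> V - Aa" unfolding Fa_def Ea_def' by blast
        have "q \<noteq> x" using pq True by blast
        moreover have "x \<in> {p,q}" using e pq by blast
        ultimately have "x = p" by blast
        hence "e = {x,q}" using pq by simp
        moreover have "q \<in> nb x" using e \<open>e = {x,q}\<close> unfolding nb_def Fa_def by blast
        ultimately show "e \<in> (\<lambda>z. {x,z}) ` (nb x - Aa)" using pq by blast
      qed
      show "(\<lambda>z. {x,z}) ` (nb x - Aa) \<subseteq> {e\<in>Fa. x\<in>e}"
      proof
        fix e assume "e \<in> (\<lambda>z. {x,z}) ` (nb x - Aa)"
        then obtain z where z: "z \<in> nb x" "z \<notin> Aa" "e = {x,z}" by blast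
        have "e \<in> F" using z unfolding nb_def by simp
        moreover have "z \<in> V" using z nb_sub by blast
        ultimately have "e \<in> Ea" using EaI[of e x z] FE x z by blast
        thus "e \<in> {e\<in>Fa. x\<in>e}" using \<open>e \<in> F\<close> z unfolding Fa_def by blast
      qed
    qed
    have "|nb x - Aa| =o |(\<lambda>z. {x,z}) ` (nb x - Aa)|"
      using inj_on_imp_bij_betw[OF nb_inj[of x "nb x - Aa"]] card_of_ordIso by blast
    hence i1: "|(\<lambda>z. {x,z}) ` (nb x - Aa)| =o |nb x - Aa|" by (rule ordIso_symmetric)
    have "|nb x - Aa| =o R"
    proof -
      have "|nb x - Aa| \<le>o |nb x|" by (rule card_of_mono1) blast
      hence "|nb x - Aa| \<le>o R" using nb_le by (rule ordLeq_transitive)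
      moreover have "\<not> |nb x - Aa| <o R"
      proof
        assume "|nb x - Aa| <o R"
        hence "|(nb x - Aa) \<union> Aa| <o R" using card_of_Un_ordLess_infinite_Field[OF infR CO _ AaR] by blast
        moreover have "|nb x| \<le>o |(nb x - Aa) \<union> Aa|" by (rule card_of_mono1) blast
        ultimately have "|nb x| <o R" using ordLeq_ordLess_trans by blast
        moreover have "|nb x| =o R" using nb_f[OF xV] fx by (rule ordIso_transitive)
        ultimately show False using not_ordLess_ordIso by blast
      qed
      ultimately show ?thesis using ordLeq_iff_ordLess_or_ordIso by blast
    qed
    hence "|(\<lambda>z. {x,z}) ` (nb x - Aa)| =o R" using i1 ordIso_transitive by blast
    thus ?thesis unfolding eq using ordIso_symmetric[OF fx] by (rule ordIso_transitive)
  qed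
  have pf: "perfect_factor Va Ea (f_at K V f Aa) Fa"
    unfolding perfect_factor_def using deg fa Fa_def by auto
  have ic: "inC Va Ea (f_at K V f Aa)"
    unfolding inC_def
  proof (intro conjI ballI)
    show "is_graph Va Ea" by (rule graph)
    fix x assume x: "x \<in> Va"
    have "|{e\<in>Fa. x\<in>e}| \<le>o |{e\<in>Ea. x\<in>e}|" by (rule card_of_mono1) (auto simp: Fa_def)
    thus "|f_at K V f Aa x| \<le>o |{e\<in>Ea. x\<in>e}|"
      using deg[OF x] fa[OF x] ordIso_symmetric ordIso_ordLeq_trans by fastforce
  qed
  show ?thesis using pf ic unfolding Aa_def Va_def Ea_def Fa_def by blast
qed

end


theorem lemma4:
  fixes P :: "'a set \<Rightarrow> 'a set set \<Rightarrow> ('a \<Rightarrow> 'b set) \<Rightarrow> bool"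
    and K :: "'k set" and V :: "'a set" and E :: "'a set set" and f :: "'a \<Rightarrow> 'b set"
  assumes necessary: "\<forall>V' E' f'. inC V' E' f' \<and> (\<exists>F. perfect_factor V' E' f' F) \<longrightarrow> fulfills P V' E' f'"
    and kappa: "infinite K"
    and C: "inC V E f"
    and size: "(card_of V, cardSuc (card_of K)) \<in> ordIso"
    and perfect: "\<exists>F. perfect_factor V E f F"
  shows "\<not> P_destructed P K V E f"
proof
  assume "P_destructed P K V E f"
  then obtain A where dA: "is_P_destruction P K V E f A" unfolding P_destructed_def by blast
  obtain F where pF: "perfect_factor V E f F" using perfect by blast
  interpret L: L4 K V E F f A
  proof
    show "infinite K" by (rule kappa)
    show "is_graph V E" using C unfolding inC_def by blast
    show "|V| =o cardSuc |K|" using size .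
    show "F \<subseteq> E" using pF unfolding perfect_factor_def by blast
    show "\<forall>x\<in>V. |{e\<in>F. x\<in>e}| =o |f x|" using pF unfolding perfect_factor_def by blast
    show "destr_seq K V A" using dA unfolding is_P_destruction_def by blast
  qed
  have "stationary (cardSuc (card_of K)) {a \<in> Field (cardSuc (card_of K)).
          \<not> fulfills P (V_at K V f (A a)) (E_at K V E f (A a)) (f_at K V f (A a))}"
    using dA unfolding is_P_destruction_def by blast
  then obtain a where a: "a \<in> Field (cardSuc (card_of K))" "L.cl (A a)"
    "\<not> fulfills P (V_at K V f (A a)) (E_at K V E f (A a)) (f_at K V f (A a))"
    using L.clubC unfolding stationary_def by blast
  show False using L.good[OF a(1,2)] necessary a(3) by blast
qed

end
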